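(* Let $W$ be a channel from $\{1,\dots,m\}$ to $\{1,\dots,n\}$. Then $\Lambda(W)$ is a bounded, closed convex polytope. For each $f\in\{10,01,11\}$, the set $\{C_f(\lambda):\lambda\in\Lambda(W)\}$ is a closed interval and $\overline{C}_f(W)$ is attained at some vertex of $\Lambda(W)$. Furthermore, $\underline{C}_{11}(W)$ is also attained at some vertex of $\Lambda(W)$.
   Context: A channel from a finite set $A$ to a finite set $B$ is a row-stochastic matrix. Let $\mathcal{X}=\{1,\dots,m\}$, $\mathcal{Y}=\{1,\dots,n\}$. A deterministic channel is a 0-1 channel, identified with a map $D:\mathcal{X}\to\mathcal{Y}$; $\mathcal{D}$ is the set of all of them, $\mathrm{rank}(D)$ the matrix rank. $\Lambda(W)=\{\lambda\text{ probability distribution on }\mathcal{D}: W=\sum_D\lambda_DD\}$. For a channel $K$ and input distribution $\mu$, $I(\mu,K)=\sum_x\mu_x D(K_{x,*}\|\mu K)$ (KL divergence, base 2). For a probability distribution $\lambda$ on $\mathcal{D}$: $C_{11}(\lambda)=\sum_D\lambda_D\log_2\mathrm{rank}(D)$; $C_{01}(\lambda)=\max_{\mu}\sum_D\lambda_D I(\mu,D)$ over distributions $\mu$ on $\mathcal{X}$; $C_{10}(\lambda)=\max_\mu I(\mu,V^\lambda)$ over distributions $\mu$ on the set $\mathcal{X}^{\mathcal{D}}$ of maps $u:\mathcal{D}\to\mathcal{X}$, where $V^\lambda_{u,y}=\sum_D\lambda_D D_{u(D),y}$. $\underline{C}_f(W)=\inf_{\lambda\in\Lambda(W)}C_f(\lambda)$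 and $\overline{C}_f(W)=\sup_{\lambda\in\Lambda(W)}C_f(\lambda)$. *)

theory Defs
  imports "HOL-Analysis.Analysis"
begin

text \<open>Input alphabet X = UNIV :: 'x set (finite, card m), output alphabet Y = UNIV :: 'y set
  (finite, card n). Matrices are real^'y^'x (rows indexed by inputs).\<close>

definition is_channel :: "real^'b::finite^'a::finite \<Rightarrow> bool" where
  "is_channel K \<longleftrightarrow> (\<forall>a b. 0 \<le> K $ a $ b) \<and> (\<forall>a. (\<Sum>b\<in>UNIV. K $ a $ b) = 1)"

definition detmat :: "('x::finite \<Rightarrow> 'y::finite) \<Rightarrow> real^'y^'x" where
  "detmat D = (\<chi> x y. if D x = y then 1 else 0)"

definition prob_dists :: "('a::finite \<Rightarrow> real) set" where
  "prob_dists = {\<mu>. (\<forall>a. 0 \<le> \<mu> a) \<and> (\<Sum>a\<in>UNIV. \<mu> a) = 1}"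

definition Lam :: "real^'y::finite^'x::finite \<Rightarrow> (real^('x \<Rightarrow> 'y)) set" where
  "Lam W = {l. (\<forall>D. 0 \<le> l $ D) \<and> (\<Sum>D\<in>UNIV. l $ D) = 1 \<and>
                W = (\<Sum>D\<in>UNIV. l $ D *\<^sub>R detmat D)}"

definition KL :: "('b::finite \<Rightarrow> real) \<Rightarrow> ('b \<Rightarrow> real) \<Rightarrow> real" where
  "KL p q = (\<Sum>b\<in>UNIV. if p b = 0 then 0 else p b * log 2 (p b / q b))"

definition outd :: "('a::finite \<Rightarrow> real) \<Rightarrow> ('a \<Rightarrow> 'b \<Rightarrow> real) \<Rightarrow> 'b \<Rightarrow> real" where
  "outd \<mu> K b = (\<Sum>a\<in>UNIV. \<mu> a * K a b)"

definition MI :: "('a::finite \<Rightarrow> real) \<Rightarrow> ('a \<Rightarrow> 'b::finite \<Rightarrow> real) \<Rightarrow> real" where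
  "MI \<mu> K = (\<Sum>a\<in>UNIV. if \<mu> a = 0 then 0 else \<mu> a * KL (K a) (outd \<mu> K))"

definition C11 :: "real^('x::finite \<Rightarrow> 'y::finite) \<Rightarrow> real" where
  "C11 l = (\<Sum>D\<in>UNIV. l $ D * log 2 (real (rank (detmat D))))"

definition C01 :: "real^('x::finite \<Rightarrow> 'y::finite) \<Rightarrow> real" where
  "C01 l = (SUP \<mu>\<in>(prob_dists :: ('x \<Rightarrow> real) set).
              (\<Sum>D\<in>UNIV. l $ D * MI \<mu> (\<lambda>x y. detmat D $ x $ y)))"

definition Vlam :: "real^('x::finite \<Rightarrow> 'y::finite) \<Rightarrow> (('x \<Rightarrow> 'y) \<Rightarrow> 'x) \<Rightarrow> 'y \<Rightarrow> real" where
  "Vlam l u y = (\<Sum>D\<in>UNIV. l $ D * detmat D $ (u D) $ y)"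

definition C10 :: "real^('x::finite \<Rightarrow> 'y::finite) \<Rightarrow> real" where
  "C10 l = (SUP \<mu>\<in>(prob_dists :: ((('x \<Rightarrow> 'y) \<Rightarrow> 'x) \<Rightarrow> real) set). MI \<mu> (Vlam l))"

definition Cupper :: "(real^('x::finite \<Rightarrow> 'y::finite) \<Rightarrow> real) \<Rightarrow> real^'y^'x \<Rightarrow> real" where
  "Cupper C W = (SUP l\<in>Lam W. C l)"

definition Clower :: "(real^('x::finite \<Rightarrow> 'y::finite) \<Rightarrow> real) \<Rightarrow> real^'y^'x \<Rightarrow> real" where
  "Clower C W = (INF l\<in>Lam W. C l)"

end

theory Submission
  imports Defs
begin


lemma detmat_nth[simp]: "detmat D $ x $ y = (if D x = y then 1 else 0)"
  by (simp add: detmat_def)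

lemma sum_prod_fun:
  fixes f :: "'x::finite \<Rightarrow> 'y::finite \<Rightarrow> real"
  shows "(\<Sum>D\<in>UNIV. \<Prod>x\<in>UNIV. f x (D x)) = (\<Prod>x\<in>UNIV. \<Sum>y\<in>UNIV. f x y)"
proof -
  have "(\<Prod>x\<in>UNIV. \<Sum>y\<in>UNIV. f x y) = (\<Sum>g\<in>PiE UNIV (\<lambda>_. UNIV). \<Prod>x\<in>UNIV. f x (g x))"
    by (rule prod_sum_PiE) auto
  then show ?thesis by simp
qed

lemma Lam_nonempty:
  fixes W :: "real^'y::finite^'x::finite"
  assumes "is_channel W"
  shows "(\<chi> D. \<Prod>x\<in>UNIV. W$x$(D x)) \<in> Lam W"
proof -
  have nn: "\<And>a b. 0 \<le> W$a$b" and rs: "\<And>a. (\<Sum>b\<in>UNIV. W$a$b) = 1"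
    using assms by (auto simp: is_channel_def)
  have s1: "(\<Sum>D\<in>UNIV. \<Prod>x\<in>UNIV. W$x$(D x)) = 1"
    using sum_prod_fun[of "\<lambda>x y. W$x$y"] by (simp add: rs)
  have comp: "W$x$y = (\<Sum>D\<in>UNIV. (\<Prod>x\<in>UNIV. W$x$(D x)) * (if D x = y then 1 else 0))" for x y
  proof -
    define f where "f x' y' = (if x' = x \<and> y' \<noteq> y then 0 else W$x'$y')" for x' y'
    have "(\<Prod>x'\<in>UNIV. f x' (D x')) = (\<Prod>x\<in>UNIV. W$x$(D x)) * (if D x = y then 1 else 0)" for D::"'x\<Rightarrow>'y"
    proof (cases "D x = y")
      case True
      then show ?thesis by (auto simp: f_def intro!: prod.cong)
    next
      case False
      then have "f x (D x) = 0" by (simp add: f_def)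
      then have "(\<Prod>x'\<in>UNIV. f x' (D x')) = 0"
        using prod_zero[of UNIV "\<lambda>x'. f x' (D x')"] by auto
      then show ?thesis using False by simp
    qed
    then have "(\<Sum>D\<in>UNIV. (\<Prod>x\<in>UNIV. W$x$(D x)) * (if D x = y then 1 else 0)) = (\<Prod>x'\<in>UNIV. \<Sum>y'\<in>UNIV. f x' y')"
      using sum_prod_fun[of f] by simp
    also have "\<dots> = (\<Prod>x'\<in>UNIV. if x' = x then W$x$y else 1)"
    proof (rule prod.cong)
      fix x' assume "x' \<in> (UNIV::'x set)"
      show "(\<Sum>y'\<in>UNIV. f x' y') = (if x' = x then W$x$y else 1)"
      proof (cases "x' = x")
        case True
        then have "(\<Sum>y'\<in>UNIV. f x' y') = (\<Sum>y'\<in>UNIV. if y' = y then W$x$y else 0)"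
          by (intro sum.cong) (auto simp: f_def)
        then show ?thesis using True by simp
      qed (simp add: f_def rs)
    qed simp
    also have "\<dots> = W$x$y" by simp
    finally show ?thesis by simp
  qed
  have "W = (\<Sum>D\<in>UNIV. (\<chi> D. \<Prod>x\<in>UNIV. W$x$(D x)) $ D *\<^sub>R detmat D)"
  proof (rule vec_eq_iff[THEN iffD2], intro allI)
    fix x show "W $ x = (\<Sum>D\<in>UNIV. (\<chi> D. \<Prod>x\<in>UNIV. W$x$(D x)) $ D *\<^sub>R detmat D) $ x"
    proof (rule vec_eq_iff[THEN iffD2], intro allI)
      fix y show "W $ x $ y = (\<Sum>D\<in>UNIV. (\<chi> D. \<Prod>x\<in>UNIV. W$x$(D x)) $ D *\<^sub>R detmat D) $ x $ y"
      proof -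
        have "(\<Sum>D\<in>UNIV. (\<chi> D. \<Prod>x\<in>UNIV. W$x$(D x)) $ D *\<^sub>R detmat D) $ x $ y
           = (\<Sum>D\<in>UNIV. (\<Prod>x\<in>UNIV. W$x$(D x)) * (if D x = y then 1 else 0))"
          unfolding sum_component by simp
        then show ?thesis using comp[of x y] by linarith
      qed
    qed
  qed
  then show ?thesis
    unfolding Lam_def
    by (auto simp: nn prod_nonneg s1)
qed



lemma inner_gen: "(\<chi> E. c E) \<bullet> (l::real^'n::finite) = (\<Sum>E\<in>UNIV. c E * l $ E)"
  by (simp add: inner_vec_def)

lemma inner_indic: "(\<chi> E. if E = D then 1 else 0) \<bullet> (l::real^'n::finite) = l $ D"
proof -
  have eq: "(\<lambda>E. (if E = D then 1 else 0) * l$E) = (\<lambda>E. if E = D then l$E else 0)" by auto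
  show ?thesis unfolding inner_gen eq by simp
qed

lemma Lam_eq:
  fixes W :: "real^'y::finite^'x::finite"
  shows "Lam W = (\<Inter>D\<in>UNIV. {l. (\<chi> E. if E = D then 1 else 0) \<bullet> l \<ge> 0}) \<inter> {l. (\<chi> E. 1) \<bullet> l = 1}
     \<inter> (\<Inter>p\<in>UNIV. {l. (\<chi> D. detmat D $ fst p $ snd p) \<bullet> l = W $ fst p $ snd p})"
proof -
  have e: "(W = (\<Sum>D\<in>UNIV. l $ D *\<^sub>R detmat D)) \<longleftrightarrow> (\<forall>x y. (\<Sum>D\<in>UNIV. detmat D $ x $ y * l $ D) = W $ x $ y)" for l
    by (auto simp: vec_eq_iff sum_component mult.commute)
  show ?thesis
    unfolding Lam_def inner_indic inner_gen e by auto
qed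

lemma Lam_polyhedron: "polyhedron (Lam W)"
  unfolding Lam_eq
  by (intro polyhedron_Int polyhedron_Inter finite_imageI finite)
     (auto intro: polyhedron_halfspace_ge polyhedron_hyperplane)

lemma Lam_bounded: "bounded (Lam W)"
proof -
  have "norm l \<le> 1" if "l \<in> Lam W" for l
  proof -
    have "norm l \<le> (\<Sum>i\<in>UNIV. \<bar>l $ i\<bar>)" by (rule norm_le_l1_cart)
    also have "\<dots> = (\<Sum>i\<in>UNIV. l $ i)" using that by (auto simp: Lam_def)
    also have "\<dots> = 1" using that by (auto simp: Lam_def)
    finally show ?thesis .
  qed
  then show ?thesis unfolding bounded_iff by blast
qed

lemma Lam_basic: "bounded (Lam W) \<and> closed (Lam W) \<and> convex (Lam W) \<and> polytope (Lam W) \<and> compact (Lam W)"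
proof -
  have p: "polyhedron (Lam W)" by (rule Lam_polyhedron)
  have b: "bounded (Lam W)" by (rule Lam_bounded)
  have c: "closed (Lam W)" using p by (rule polyhedron_imp_closed)
  show ?thesis using p b c polyhedron_imp_convex[OF p] polytope_eq_bounded_polyhedron[of "Lam W"]
    compact_eq_bounded_closed[of "Lam W"] by simp
qed



lemma seg_cont:
  fixes \<phi> :: "real \<Rightarrow> real" and f :: "'p \<Rightarrow> real \<Rightarrow> real"
  assumes cv: "convex_on {0..1} \<phi>" and P: "P \<noteq> {}"
    and cont: "\<And>\<mu>. \<mu> \<in> P \<Longrightarrow> continuous_on {0..1} (f \<mu>)"
    and bnd: "\<And>\<mu> t. \<mu> \<in> P \<Longrightarrow> t \<in> {0..1} \<Longrightarrow> f \<mu> t \<le> B"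
    and eq: "\<And>t. t \<in> {0..1} \<Longrightarrow> \<phi> t = (SUP \<mu>\<in>P. f \<mu> t)"
  shows "continuous_on {0..1} \<phi>"
proof -
  have bdd: "bdd_above ((\<lambda>\<mu>. f \<mu> t) ` P)" if "t \<in> {0..1}" for t
    using bnd that by (auto intro!: bdd_aboveI)
  have up: "f \<mu> t \<le> \<phi> t" if "\<mu>\<in>P" "t \<in> {0..1}" for \<mu> t
    using cSUP_upper[OF that(1) bdd[OF that(2)]] eq[OF that(2)] by simp
  have ev01: "eventually (\<lambda>s. s \<in> {0..1}) (at t within {0..1})" for t :: real
    by (simp add: eventually_at_filter)
  have ub: "\<phi> s \<le> (1 - s) * \<phi> 0 + s * \<phi> 1" if "s \<in> {0..1}" for s
    using convex_onD[OF cv, of s 0 1] that by simp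
  have "continuous (at t within {0..1}) \<phi>" if t: "t \<in> {0..1}" for t
  proof (cases "t \<in> {0<..<1}")
    case True
    have "continuous_on {0<..<1} \<phi>"
      by (rule convex_on_continuous) (auto intro: convex_on_subset[OF cv])
    then have "continuous (at t) \<phi>"
      using True by (intro continuous_on_interior) auto
    then show ?thesis by (rule continuous_at_imp_continuous_within)
  next
    case False
    with t have t01: "t = 0 \<or> t = 1" by auto
    show ?thesis unfolding continuous_within
    proof (rule order_tendstoI)
      fix a assume a: "a < \<phi> t"
      then obtain \<mu> where \<mu>: "\<mu> \<in> P" "a < f \<mu> t"
        using less_cSUP_iff[OF P bdd[OF t]] eq[OF t] by auto
      have "continuous (at t within {0..1}) (f \<mu>)"
        using cont[OF \<mu>(1)] t by (simp add: continuous_on_eq_continuous_within)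
      then have "eventually (\<lambda>s. a < f \<mu> s) (at t within {0..1})"
        using \<mu>(2) unfolding continuous_within by (rule order_tendstoD(1))
      then show "eventually (\<lambda>s. a < \<phi> s) (at t within {0..1})"
        using ev01[of t] by eventually_elim (use up \<mu>(1) in force)
    next
      fix a assume a: "\<phi> t < a"
      have "((\<lambda>s. (1 - s) * \<phi> 0 + s * \<phi> 1) \<longlongrightarrow> (1 - t) * \<phi> 0 + t * \<phi> 1) (at t within {0..1})"
        by (intro tendsto_intros)
      moreover have "(1 - t) * \<phi> 0 + t * \<phi> 1 = \<phi> t" using t01 by auto
      ultimately have "eventually (\<lambda>s. (1 - s) * \<phi> 0 + s * \<phi> 1 < a) (at t within {0..1})"
        using a by (metis order_tendstoD(2))
      then show "eventually (\<lambda>s. \<phi> s < a) (at t within {0..1})"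
        using ev01[of t] by eventually_elim (use ub in force)
    qed
  qed
  then show ?thesis by (simp add: continuous_on_eq_continuous_within)
qed



lemma abstract_main:
  fixes S :: "'a::euclidean_space set" and g :: "'p \<Rightarrow> 'a \<Rightarrow> real" and C :: "'a \<Rightarrow> real"
  assumes Sc: "compact S" and Sv: "convex S" and Sne: "S \<noteq> {}"
    and Sf: "finite {v. v extreme_point_of S}"
    and P: "P \<noteq> {}"
    and cont: "\<And>\<mu>. \<mu> \<in> P \<Longrightarrow> continuous_on S (g \<mu>)"
    and cvx: "\<And>\<mu>. \<mu> \<in> P \<Longrightarrow> convex_on S (g \<mu>)"
    and bnd: "\<And>\<mu> x. \<mu> \<in> P \<Longrightarrow> x \<in> S \<Longrightarrow> g \<mu> x \<le> B"
    and Ceq: "\<And>x. x \<in> S \<Longrightarrow> C x = (SUP \<mu>\<in>P. g \<mu> x)"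
  shows "(\<exists>a b. a \<le> b \<and> C ` S = {a..b}) \<and> (\<exists>v. v extreme_point_of S \<and> (\<forall>x\<in>S. C x \<le> C v))"
proof -
  have bdd: "bdd_above ((\<lambda>\<mu>. g \<mu> x) ` P)" if "x \<in> S" for x
    using bnd that by (auto intro!: bdd_aboveI)
  have up: "g \<mu> x \<le> C x" if "\<mu>\<in>P" "x \<in> S" for \<mu> x
    using cSUP_upper[OF that(1) bdd[OF that(2)]] Ceq[OF that(2)] by simp
  have Cconv: "convex_on S C"
  proof (rule convex_onI)
    fix t :: real and x y assume t: "0 < t" "t < 1" and xy: "x \<in> S" "y \<in> S"
    have m: "(1 - t) *\<^sub>R x + t *\<^sub>R y \<in> S" using convexD[OF Sv xy, of "1-t" t] t by simp
    show "C ((1 - t) *\<^sub>R x + t *\<^sub>R y) \<le> (1 - t) * C x + t * C y"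
      unfolding Ceq[OF m]
    proof (rule cSUP_least[OF P])
      fix \<mu> assume \<mu>: "\<mu> \<in> P"
      have "g \<mu> ((1 - t) *\<^sub>R x + t *\<^sub>R y) \<le> (1 - t) * g \<mu> x + t * g \<mu> y"
        using convex_onD[OF cvx[OF \<mu>], of t x y] t xy by simp
      also have "\<dots> \<le> (1 - t) * C x + t * C y"
        using up[OF \<mu> xy(1)] up[OF \<mu> xy(2)] t by (intro add_mono mult_left_mono) auto
      finally show "g \<mu> ((1 - t) *\<^sub>R x + t *\<^sub>R y) \<le> (1 - t) * C x + t * C y" .
    qed
  qed (rule Sv)
  define E where "E = {v. v extreme_point_of S}"
  have SE: "S = convex hull E" unfolding E_def by (rule Krein_Milman_Minkowski[OF Sc Sv])
  have Ene: "E \<noteq> {}" using Sne SE convex_hull_empty by metis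
  have Ef: "finite E" using Sf E_def by simp
  obtain v where v: "v \<in> E" "C v = Max (C ` E)"
  proof -
    have "Max (C ` E) \<in> C ` E" using Max_in[of "C ` E"] Ef Ene by auto
    then show ?thesis using that by (metis imageE)
  qed
  have vmax: "\<forall>x\<in>S. C x \<le> C v"
  proof -
    have "\<forall>x\<in>E. C x \<le> C v" unfolding v(2) using Max_ge[OF finite_imageI[OF Ef]] by blast
    moreover have "convex_on (convex hull E) C" using Cconv SE by simp
    ultimately have "\<forall>x\<in>convex hull E. C x \<le> C v" by (intro convex_on_convex_hull_bound) auto
    then show ?thesis using SE by simp
  qed
  have "v \<in> convex hull E" using v(1) by (rule hull_inc)
  then have vS: "v \<in> S" using SE by simp
  obtain \<mu>0 where \<mu>0: "\<mu>0 \<in> P" using P by auto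
  have "compact (g \<mu>0 ` S)" by (rule compact_continuous_image[OF cont[OF \<mu>0] Sc])
  then have "bdd_below (g \<mu>0 ` S)" by (simp add: bounded_imp_bdd_below compact_imp_bounded)
  then obtain L where L: "\<And>x. x \<in> S \<Longrightarrow> L \<le> g \<mu>0 x" by (auto simp: bdd_below_def)
  have "L \<le> C x" if "x \<in> S" for x using L[OF that] up[OF \<mu>0 that] by linarith
  then have bddC: "bdd_below (C ` S)" by (rule bdd_belowI2)
  define m where "m = (INF x\<in>S. C x)"
  have "\<exists>y. y \<in> S \<and> C y < m + inverse (real (Suc n))" for n
  proof -
    have "Inf (C ` S) < m + inverse (real (Suc n))" unfolding m_def by simp
    then show ?thesis using cInf_lessD[of "C ` S"] Sne by auto
  qed
  then obtain y where y: "\<And>n. y n \<in> S" "\<And>n. C (y n) < m + inverse (real (Suc n))" by metis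
  obtain x0 r where x0: "x0 \<in> S" "strict_mono r" "(y \<circ> r) \<longlonglongrightarrow> x0"
    using compact_imp_seq_compact[OF Sc] y(1) unfolding seq_compact_def by metis
  have "C x0 \<le> m"
    unfolding Ceq[OF x0(1)]
  proof (rule cSUP_least[OF P])
    fix \<mu> assume \<mu>: "\<mu> \<in> P"
    have l1: "(\<lambda>n. g \<mu> ((y \<circ> r) n)) \<longlonglongrightarrow> g \<mu> x0"
      by (rule continuous_on_tendsto_compose[OF cont[OF \<mu>] x0(3) x0(1)]) (use y(1) in auto)
    have l2: "((\<lambda>n. m + inverse (real (Suc n))) \<circ> r) \<longlonglongrightarrow> m"
      by (rule LIMSEQ_subseq_LIMSEQ[OF LIMSEQ_inverse_real_of_nat_add x0(2)])
    show "g \<mu> x0 \<le> m"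
    proof (rule LIMSEQ_le[OF l1 l2], intro exI allI impI)
      fix n
      show "g \<mu> ((y \<circ> r) n) \<le> ((\<lambda>n. m + inverse (real (Suc n))) \<circ> r) n"
        using up[OF \<mu> y(1)[of "r n"]] y(2)[of "r n"] by simp
    qed
  qed
  then have x0min: "\<forall>x\<in>S. C x0 \<le> C x"
  proof (intro ballI)
    fix x assume "x \<in> S"
    then have "m \<le> C x" unfolding m_def by (rule cINF_lower[OF bddC])
    with \<open>C x0 \<le> m\<close> show "C x0 \<le> C x" by linarith
  qed
  have img: "C ` S = {C x0..C v}"
  proof
    show "C ` S \<subseteq> {C x0..C v}" using x0min vmax by auto
  next
    show "{C x0..C v} \<subseteq> C ` S"
    proof
      fix c assume c: "c \<in> {C x0..C v}"
      define p where "p t = (1 - t) *\<^sub>R x0 + t *\<^sub>R v" for t :: real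
      have pS: "p t \<in> S" if "t \<in> {0..1}" for t
        using convexD[OF Sv x0(1) vS, of "1-t" t] that by (simp add: p_def)
      have pcont: "continuous_on {0..1} p" unfolding p_def by (intro continuous_intros)
      have pc: "p ((1 - u) * s1 + u * s2) = (1 - u) *\<^sub>R p s1 + u *\<^sub>R p s2" for u s1 s2
        by (simp add: p_def algebra_simps)
      have cvphi: "convex_on {0..1} (\<lambda>t. C (p t))"
      proof (rule convex_onI)
        fix u s1 s2 :: real assume u: "0 < u" "u < 1" and s: "s1 \<in> {0..1}" "s2 \<in> {0..1}"
        show "C (p ((1 - u) *\<^sub>R s1 + u *\<^sub>R s2)) \<le> (1 - u) * C (p s1) + u * C (p s2)"
          using convex_onD[OF Cconv, of u "p s1" "p s2"] u pS[OF s(1)] pS[OF s(2)] pc by simp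
      qed (rule convex_real_interval)
      have "continuous_on {0..1} (\<lambda>t. C (p t))"
      proof (rule seg_cont[OF cvphi P, of "\<lambda>\<mu> t. g \<mu> (p t)" B])
        fix \<mu> assume \<mu>: "\<mu> \<in> P"
        show "continuous_on {0..1} (\<lambda>t. g \<mu> (p t))"
          by (rule continuous_on_compose2[OF cont[OF \<mu>] pcont]) (use pS in auto)
      next
        fix \<mu> t assume "\<mu> \<in> P" "t \<in> {0::real..1}"
        then show "g \<mu> (p t) \<le> B" using bnd pS by auto
      next
        fix t assume "t \<in> {0::real..1}"
        then show "C (p t) = (SUP \<mu>\<in>P. g \<mu> (p t))" using Ceq pS by auto
      qed
      moreover have "C (p 0) \<le> c" "c \<le> C (p 1)" using c by (auto simp: p_def)
      ultimately obtain t where t: "0 \<le> t" "t \<le> 1" "C (p t) = c"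
        using IVT'[of "\<lambda>t. C (p t)" 0 c 1] by auto
      then show "c \<in> C ` S" using pS[of t] by auto
    qed
  qed
  have "C x0 \<le> C v" using x0min vS by auto
  moreover have "v extreme_point_of S" using v(1) E_def by simp
  ultimately show ?thesis using img vmax by blast
qed



definition Fl :: "real \<Rightarrow> real \<Rightarrow> real" where
  "Fl s t = s * ln s - s * ln t"

lemma Fl_homog:
  assumes "0 \<le> c" "0 \<le> s" "s \<le> t"
  shows "Fl (c * s) (c * t) = c * Fl s t"
proof (cases "c = 0 \<or> s = 0")
  case True then show ?thesis by (auto simp: Fl_def)
next
  case False
  then have pos: "0 < c" "0 < s" "0 < t" using assms by auto
  then show ?thesis by (simp add: Fl_def ln_mult algebra_simps)
qed

lemma Fl_logsum2:
  assumes w1: "0 \<le> w1" "w1 \<le> v1" and w2: "0 \<le> w2" "w2 \<le> v2"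
  shows "Fl (w1 + w2) (v1 + v2) \<le> Fl w1 v1 + Fl w2 v2"
proof -
  consider "w1 = 0" "w2 = 0" | "w1 = 0" "w2 > 0" | "w1 > 0" "w2 = 0" | "w1 > 0" "w2 > 0"
    using w1 w2 by linarith
  then show ?thesis
  proof cases
    case 1 then show ?thesis by (simp add: Fl_def)
  next
    case 2
    then have "v2 > 0" "v1 \<ge> 0" using w1 w2 by auto
    then have "ln v2 \<le> ln (v1 + v2)" by simp
    then have "w2 * ln v2 \<le> w2 * ln (v1 + v2)" using 2 by (intro mult_left_mono) auto
    then show ?thesis using 2 by (simp add: Fl_def)
  next
    case 3
    then have "v1 > 0" "v2 \<ge> 0" using w1 w2 by auto
    then have "ln v1 \<le> ln (v1 + v2)" by simp
    then have "w1 * ln v1 \<le> w1 * ln (v1 + v2)" using 3 by (intro mult_left_mono) auto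
    then show ?thesis using 3 by (simp add: Fl_def)
  next
    case 4
    define W where "W = w1 + w2"
    define V where "V = v1 + v2"
    have p: "v1 > 0" "v2 > 0" "W > 0" "V > 0" using 4 w1 w2 by (auto simp: W_def V_def)
    have key: "w * (ln v + ln W - ln w - ln V) \<le> v * W / V - w" if "w > 0" "v > 0" for w v
    proof -
      have "ln (v * W / (w * V)) \<le> v * W / (w * V) - 1"
        using that p by (intro ln_le_minus_one) (auto intro!: divide_pos_pos)
      moreover have "ln (v * W / (w * V)) = ln v + ln W - ln w - ln V"
        using that p by (simp add: ln_mult ln_div)
      ultimately have "ln v + ln W - ln w - ln V \<le> v * W / (w * V) - 1" by simp
      then have "w * (ln v + ln W - ln w - ln V) \<le> w * (v * W / (w * V) - 1)"
        using that by (intro mult_left_mono) auto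
      also have "\<dots> = v * W / V - w" using that p by (simp add: field_simps)
      finally show ?thesis .
    qed
    have k1: "w1 * (ln v1 + ln W - ln w1 - ln V) \<le> v1 * W / V - w1" using key 4 p by auto
    have k2: "w2 * (ln v2 + ln W - ln w2 - ln V) \<le> v2 * W / V - w2" using key 4 p by auto
    have "v1 * W / V + v2 * W / V = (v1 + v2) * W / V" by (simp add: add_divide_distrib distrib_right)
    also have "\<dots> = W" using p(4) unfolding V_def[symmetric] by simp
    finally have s: "v1 * W / V + v2 * W / V = W" .
    have "Fl W V = W * ln W - W * ln V" by (simp add: Fl_def)
    also have "\<dots> = w1 * ln W + w2 * ln W - w1 * ln V - w2 * ln V" by (simp add: W_def algebra_simps)
    finally have "Fl W V = w1 * ln W + w2 * ln W - w1 * ln V - w2 * ln V" .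
    moreover have "w1 * (ln v1 + ln W - ln w1 - ln V) = w1 * ln v1 + w1 * ln W - w1 * ln w1 - w1 * ln V"
      "w2 * (ln v2 + ln W - ln w2 - ln V) = w2 * ln v2 + w2 * ln W - w2 * ln w2 - w2 * ln V"
      by (simp_all add: algebra_simps)
    ultimately show ?thesis using k1 k2 s unfolding W_def V_def Fl_def by linarith
  qed
qed

lemma Fl_convex:
  assumes "0 \<le> s1" "s1 \<le> t1" "0 \<le> s2" "s2 \<le> t2" "0 \<le> u" "u \<le> 1"
  shows "Fl ((1 - u) * s1 + u * s2) ((1 - u) * t1 + u * t2) \<le> (1 - u) * Fl s1 t1 + u * Fl s2 t2"
proof -
  have "Fl ((1 - u) * s1 + u * s2) ((1 - u) * t1 + u * t2) \<le> Fl ((1 - u) * s1) ((1 - u) * t1) + Fl (u * s2) (u * t2)"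
    using assms by (intro Fl_logsum2 mult_left_mono mult_nonneg_nonneg) auto
  also have "\<dots> = (1 - u) * Fl s1 t1 + u * Fl s2 t2"
    using assms by (simp add: Fl_homog)
  finally show ?thesis .
qed



lemma xlnx_right: "((\<lambda>x::real. x * ln x) \<longlongrightarrow> 0) (at_right 0)"
proof -
  have "((\<lambda>y::real. - (ln y / y)) \<longlongrightarrow> 0) at_top"
    using tendsto_minus[OF ln_x_over_x_tendsto_0] by simp
  then have lim: "((\<lambda>x::real. - (ln (inverse x) / inverse x)) \<longlongrightarrow> 0) (at_right 0)"
    by (rule filterlim_compose[OF _ filterlim_inverse_at_top_right])
  have ev: "eventually (\<lambda>x::real. - (ln (inverse x) / inverse x) = x * ln x) (at_right 0)"
  proof (rule eventually_mono[OF eventually_at_right_less])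
    fix x :: real assume "0 < x"
    have "ln (inverse x) = - ln x" by (rule ln_inverse)
    then show "- (ln (inverse x) / inverse x) = x * ln x" by (simp add: divide_inverse)
  qed
  show ?thesis using tendsto_cong[OF ev] lim by simp
qed

lemma xlnx_isCont: "isCont (\<lambda>x::real. x * ln x) x"
proof (cases "x = 0")
  case True
  have r: "filterlim (\<lambda>x::real. x * ln x) (nhds 0) (at_right 0)" using xlnx_right by simp
  have "filterlim (\<lambda>x::real. - x * ln (- x)) (nhds (- 0)) (at_right 0)"
    using tendsto_minus[OF xlnx_right] by (simp add: ln_minus)
  then have l: "filterlim (\<lambda>x::real. x * ln x) (nhds 0) (at_left 0)"
    unfolding filterlim_at_left_to_right[of _ _ 0] by simp
  have "((\<lambda>x::real. x * ln x) \<longlongrightarrow> 0) (at 0)" by (rule filterlim_split_at[OF l r])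
  then show ?thesis using True by (simp add: isCont_def)
next
  case False
  then show ?thesis by (intro continuous_intros) auto
qed

lemma xlnx_cont_on: "continuous_on A (\<lambda>x::real. x * ln x)"
  using xlnx_isCont by (simp add: continuous_at_imp_continuous_on)



definition chan :: "('a::finite \<Rightarrow> 'b::finite \<Rightarrow> real) \<Rightarrow> bool" where
  "chan K \<longleftrightarrow> (\<forall>a b. 0 \<le> K a b) \<and> (\<forall>a. (\<Sum>b\<in>UNIV. K a b) = 1)"

lemma outd_ge:
  assumes "\<mu> \<in> prob_dists" "chan K"
  shows "\<mu> a * K a b \<le> outd \<mu> K b"
  unfolding outd_def
  by (rule member_le_sum[of a UNIV "\<lambda>a. \<mu> a * K a b"]) (use assms in \<open>auto simp: prob_dists_def chan_def\<close>)

lemma MI_term: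
  fixes \<mu> :: "'a::finite \<Rightarrow> real" and K :: "'a \<Rightarrow> 'b::finite \<Rightarrow> real"
  assumes mu: "\<mu> \<in> prob_dists" and K: "chan K"
  shows "(if \<mu> a = 0 then 0 else \<mu> a * KL (K a) (outd \<mu> K))
    = ((\<Sum>b\<in>UNIV. Fl (\<mu> a * K a b) (outd \<mu> K b)) - \<mu> a * ln (\<mu> a)) / ln 2"
proof (cases "\<mu> a = 0")
  case True then show ?thesis by (simp add: Fl_def)
next
  case False
  then have mpos: "\<mu> a > 0" using mu by (auto simp: prob_dists_def order.order_iff_strict)
  have Knn: "\<And>b. 0 \<le> K a b" and Ks: "(\<Sum>b\<in>UNIV. K a b) = 1" using K by (auto simp: chan_def)
  define q where "q = outd \<mu> K"
  have per: "\<mu> a * (if K a b = 0 then 0 else K a b * log 2 (K a b / q b))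
     = (Fl (\<mu> a * K a b) (q b) - \<mu> a * K a b * ln (\<mu> a)) / ln 2" for b
  proof (cases "K a b = 0")
    case True then show ?thesis by (simp add: Fl_def)
  next
    case False
    then have kpos: "K a b > 0" using Knn[of b] by simp
    have "\<mu> a * K a b \<le> q b" unfolding q_def by (rule outd_ge[OF mu K])
    then have qpos: "q b > 0" using mpos kpos by (smt (verit) mult_pos_pos)
    have l1: "log 2 (K a b / q b) = (ln (K a b) - ln (q b)) / ln 2"
      using kpos qpos by (simp add: log_def ln_div)
    have l2: "ln (\<mu> a * K a b) = ln (\<mu> a) + ln (K a b)"
      using kpos mpos by (simp add: ln_mult)
    show ?thesis using False unfolding l1 Fl_def l2 by (simp add: algebra_simps diff_divide_distrib)
  qed
  have "\<mu> a * KL (K a) q = (\<Sum>b\<in>UNIV. \<mu> a * (if K a b = 0 then 0 else K a b * log 2 (K a b / q b)))"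
    by (simp add: KL_def sum_distrib_left)
  also have "\<dots> = (\<Sum>b\<in>UNIV. (Fl (\<mu> a * K a b) (q b) - \<mu> a * K a b * ln (\<mu> a)) / ln 2)"
    using per by simp
  also have "\<dots> = ((\<Sum>b\<in>UNIV. Fl (\<mu> a * K a b) (q b)) - (\<Sum>b\<in>UNIV. \<mu> a * K a b * ln (\<mu> a))) / ln 2"
    by (simp add: sum_divide_distrib[symmetric] sum_subtractf)
  also have "(\<Sum>b\<in>UNIV. \<mu> a * K a b * ln (\<mu> a)) = \<mu> a * ln (\<mu> a) * (\<Sum>b\<in>UNIV. K a b)"
    by (simp add: sum_distrib_left algebra_simps)
  also have "\<dots> = \<mu> a * ln (\<mu> a)" using Ks by simp
  finally show ?thesis using False by (simp add: q_def)
qed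

lemma MI_ident:
  fixes \<mu> :: "'a::finite \<Rightarrow> real" and K :: "'a \<Rightarrow> 'b::finite \<Rightarrow> real"
  assumes mu: "\<mu> \<in> prob_dists" and K: "chan K"
  shows "MI \<mu> K = (\<Sum>a\<in>UNIV. (\<Sum>b\<in>UNIV. Fl (\<mu> a * K a b) (outd \<mu> K b)) - \<mu> a * ln (\<mu> a)) / ln 2"
  unfolding MI_def using MI_term[OF mu K] by (simp add: sum_divide_distrib)

lemma MI_ident2:
  fixes \<mu> :: "'a::finite \<Rightarrow> real" and K :: "'a \<Rightarrow> 'b::finite \<Rightarrow> real"
  assumes mu: "\<mu> \<in> prob_dists" and K: "chan K"
  shows "MI \<mu> K = ((\<Sum>b\<in>UNIV. (\<Sum>a\<in>UNIV. (\<mu> a * K a b) * ln (\<mu> a * K a b)) - outd \<mu> K b * ln (outd \<mu> K b))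
     - (\<Sum>a\<in>UNIV. \<mu> a * ln (\<mu> a))) / ln 2"
proof -
  have "(\<Sum>a\<in>UNIV. (\<Sum>b\<in>UNIV. Fl (\<mu> a * K a b) (outd \<mu> K b)) - \<mu> a * ln (\<mu> a))
      = (\<Sum>a\<in>UNIV. \<Sum>b\<in>UNIV. Fl (\<mu> a * K a b) (outd \<mu> K b)) - (\<Sum>a\<in>UNIV. \<mu> a * ln (\<mu> a))"
    by (simp add: sum_subtractf)
  also have "(\<Sum>a\<in>UNIV. \<Sum>b\<in>UNIV. Fl (\<mu> a * K a b) (outd \<mu> K b)) = (\<Sum>b\<in>UNIV. \<Sum>a\<in>UNIV. Fl (\<mu> a * K a b) (outd \<mu> K b))"
    by (rule sum.swap)
  also have "\<dots> = (\<Sum>b\<in>UNIV. (\<Sum>a\<in>UNIV. (\<mu> a * K a b) * ln (\<mu> a * K a b)) - outd \<mu> K b * ln (outd \<mu> K b))"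
  proof (rule sum.cong[OF refl])
    fix b
    have "(\<Sum>a\<in>UNIV. Fl (\<mu> a * K a b) (outd \<mu> K b)) = (\<Sum>a\<in>UNIV. (\<mu> a * K a b) * ln (\<mu> a * K a b)) - (\<Sum>a\<in>UNIV. \<mu> a * K a b) * ln (outd \<mu> K b)"
      by (simp add: Fl_def sum_subtractf sum_distrib_right)
    then show "(\<Sum>a\<in>UNIV. Fl (\<mu> a * K a b) (outd \<mu> K b)) = (\<Sum>a\<in>UNIV. (\<mu> a * K a b) * ln (\<mu> a * K a b)) - outd \<mu> K b * ln (outd \<mu> K b)"
      by (simp add: outd_def)
  qed
  finally show ?thesis using MI_ident[OF mu K] by simp
qed

lemma Fl_nonpos: "0 \<le> s \<Longrightarrow> s \<le> t \<Longrightarrow> Fl s t \<le> 0"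
proof (cases "s = 0")
  case False
  assume "0 \<le> s" "s \<le> t"
  then have "s > 0" "t > 0" using False by auto
  then have "ln s \<le> ln t" using \<open>s \<le> t\<close> by simp
  then have "s * ln s \<le> s * ln t" using \<open>s > 0\<close> by (intro mult_left_mono) auto
  then show ?thesis by (simp add: Fl_def)
qed (simp add: Fl_def)

lemma negxlnx: "0 \<le> (x::real) \<Longrightarrow> - (x * ln x) \<le> 1"
proof (cases "x = 0")
  case False
  assume "0 \<le> x"
  then have xp: "x > 0" using False by simp
  have "ln (inverse x) \<le> inverse x - 1" using xp by (intro ln_le_minus_one) simp
  then have "- ln x \<le> inverse x - 1" by (simp add: ln_inverse)
  then have "x * (- ln x) \<le> x * (inverse x - 1)" using xp by (intro mult_left_mono) auto
  also have "\<dots> = 1 - x" using xp by (simp add: field_simps)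
  finally show ?thesis using xp by simp
qed simp

lemma ln2_ge: "ln (2::real) \<ge> 1/2"
proof -
  have "ln (inverse (2::real)) \<le> inverse 2 - 1" by (intro ln_le_minus_one) simp
  then show ?thesis unfolding ln_inverse by simp
qed

lemma MI_bound:
  fixes \<mu> :: "'a::finite \<Rightarrow> real" and K :: "'a \<Rightarrow> 'b::finite \<Rightarrow> real"
  assumes mu: "\<mu> \<in> prob_dists" and K: "chan K"
  shows "MI \<mu> K \<le> 2 * real CARD('a)"
proof -
  have t: "(\<Sum>b\<in>UNIV. Fl (\<mu> a * K a b) (outd \<mu> K b)) - \<mu> a * ln (\<mu> a) \<le> 1" for a
  proof -
    have "(\<Sum>b\<in>UNIV. Fl (\<mu> a * K a b) (outd \<mu> K b)) \<le> 0"
      using mu K by (intro sum_nonpos Fl_nonpos outd_ge) (auto simp: prob_dists_def chan_def)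
    moreover have "- (\<mu> a * ln (\<mu> a)) \<le> 1" using mu by (intro negxlnx) (auto simp: prob_dists_def)
    ultimately show ?thesis by linarith
  qed
  have "(\<Sum>a\<in>UNIV. (\<Sum>b\<in>UNIV. Fl (\<mu> a * K a b) (outd \<mu> K b)) - \<mu> a * ln (\<mu> a)) \<le> (\<Sum>a\<in>(UNIV::'a set). 1)"
    by (rule sum_mono) (rule t)
  then have T: "(\<Sum>a\<in>UNIV. (\<Sum>b\<in>UNIV. Fl (\<mu> a * K a b) (outd \<mu> K b)) - \<mu> a * ln (\<mu> a)) \<le> real CARD('a)"
    by simp
  have l2: "ln (2::real) > 0" by simp
  have "MI \<mu> K \<le> real CARD('a) / ln 2"
    unfolding MI_ident[OF mu K] using T l2 by (simp add: divide_right_mono)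
  also have "\<dots> \<le> 2 * real CARD('a)"
    using ln2_ge l2 by (simp add: field_simps)
  finally show ?thesis .
qed

lemma chan_detmat: "chan (\<lambda>x y. detmat D $ x $ y)"
  by (simp add: chan_def)

lemma chan_Vlam:
  assumes "\<forall>D. 0 \<le> l $ D" "(\<Sum>D\<in>UNIV. l $ D) = 1"
  shows "chan (Vlam l)"
proof -
  have "(\<Sum>y\<in>UNIV. Vlam l u y) = 1" for u
  proof -
    have "(\<Sum>y\<in>UNIV. Vlam l u y) = (\<Sum>D\<in>UNIV. l $ D * (\<Sum>y\<in>UNIV. (if D (u D) = y then 1 else 0)))"
    proof -
      have "(\<Sum>y\<in>UNIV. Vlam l u y) = (\<Sum>y\<in>UNIV. \<Sum>D\<in>UNIV. l $ D * (if D (u D) = y then 1 else 0))"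
        unfolding Vlam_def by simp
      also have "\<dots> = (\<Sum>D\<in>UNIV. \<Sum>y\<in>UNIV. l $ D * (if D (u D) = y then 1 else 0))"
        by (rule sum.swap)
      also have "\<dots> = (\<Sum>D\<in>UNIV. l $ D * (\<Sum>y\<in>UNIV. (if D (u D) = y then 1 else 0)))"
        by (simp only: sum_distrib_left)
      finally show ?thesis .
    qed
    also have "\<dots> = 1" using assms by simp
    finally show ?thesis .
  qed
  moreover have "0 \<le> Vlam l u y" for u y
    unfolding Vlam_def using assms by (intro sum_nonneg) auto
  ultimately show ?thesis by (simp add: chan_def)
qed



definition xlnx :: "real \<Rightarrow> real" where "xlnx x = x * ln x"

lemma xlnx_comp[continuous_intros]: "continuous_on S f \<Longrightarrow> continuous_on S (\<lambda>x. xlnx (f x))"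
  unfolding xlnx_def by (rule continuous_on_compose2[OF xlnx_cont_on[of UNIV]]) auto

lemma prob_dists_ne: "(\<lambda>a. if a = c then 1 else 0) \<in> prob_dists"
  by (simp add: prob_dists_def)

lemma LamD: "l \<in> Lam W \<Longrightarrow> (\<forall>D. 0 \<le> l $ D) \<and> (\<Sum>D\<in>UNIV. l $ D) = 1"
  by (simp add: Lam_def)

lemma sum_comb: "(1 - t) * (\<Sum>x\<in>A. f x) + t * (\<Sum>x\<in>A. g x) = (\<Sum>x\<in>A. (1 - t) * f x + t * g x)"
  for t :: real by (simp add: sum.distrib sum_distrib_left)

lemma Vlam_comb: "Vlam ((1 - t) *\<^sub>R l1 + t *\<^sub>R l2) u y = (1 - t) * Vlam l1 u y + t * Vlam l2 u y"
  unfolding Vlam_def sum_comb by (rule sum.cong) (simp_all add: algebra_simps)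

lemma outd_comb:
  assumes h: "\<And>u y. K u y = (1 - t) * K1 u y + t * K2 u y"
  shows "outd \<mu> K y = (1 - t) * outd \<mu> K1 y + t * outd \<mu> K2 y"
  unfolding outd_def sum_comb h by (rule sum.cong) (simp_all add: algebra_simps)

lemma C10_cont:
  assumes mu: "\<mu> \<in> prob_dists"
  shows "continuous_on (Lam W) (\<lambda>l. MI \<mu> (Vlam l))"
proof -
  have eq: "MI \<mu> (Vlam l) = ((\<Sum>b\<in>UNIV. (\<Sum>a\<in>UNIV. xlnx (\<mu> a * Vlam l a b)) - xlnx (outd \<mu> (Vlam l) b))
     - (\<Sum>a\<in>UNIV. \<mu> a * ln (\<mu> a))) / ln 2" if "l \<in> Lam W" for l
    using MI_ident2[OF mu chan_Vlam] LamD[OF that] unfolding xlnx_def by auto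
  have "continuous_on (Lam W) (\<lambda>l. ((\<Sum>b\<in>UNIV. (\<Sum>a\<in>UNIV. xlnx (\<mu> a * Vlam l a b)) - xlnx (outd \<mu> (Vlam l) b))
     - (\<Sum>a\<in>UNIV. \<mu> a * ln (\<mu> a))) / ln 2)"
    unfolding outd_def Vlam_def by (intro continuous_intros) auto
  then show ?thesis using eq by (simp add: continuous_on_eq)
qed



lemma C10_convex:
  fixes W :: "real^'y::finite^'x::finite"
  assumes mu: "\<mu> \<in> prob_dists"
  shows "convex_on (Lam W) (\<lambda>l. MI \<mu> (Vlam l))"
proof (rule convex_onI)
  fix t :: real and l1 l2 assume t: "0 < t" "t < 1" and l1: "l1 \<in> Lam W" and l2: "l2 \<in> Lam W"
  define l where "l = (1 - t) *\<^sub>R l1 + t *\<^sub>R l2"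
  have cvx: "convex (Lam W)" using Lam_basic by blast
  have lL: "l \<in> Lam W" unfolding l_def using convexD[OF cvx l1 l2, of "1 - t" t] t by simp
  have ch: "chan (Vlam l')" if "l' \<in> Lam W" for l' using LamD[OF that] by (intro chan_Vlam) auto
  define A where "A l' = (\<Sum>a\<in>UNIV. (\<Sum>b\<in>UNIV. Fl (\<mu> a * Vlam l' a b) (outd \<mu> (Vlam l') b)) - \<mu> a * ln (\<mu> a))" for l'
  have MIA: "MI \<mu> (Vlam l') = A l' / ln 2" if "l' \<in> Lam W" for l'
    unfolding A_def by (rule MI_ident[OF mu ch[OF that]])
  have KV: "\<And>u y. Vlam l u y = (1 - t) * Vlam l1 u y + t * Vlam l2 u y" unfolding l_def by (rule Vlam_comb)
  have q: "\<And>y. outd \<mu> (Vlam l) y = (1 - t) * outd \<mu> (Vlam l1) y + t * outd \<mu> (Vlam l2) y"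
    by (rule outd_comb[OF KV])
  have munn: "0 \<le> \<mu> a" for a using mu by (simp add: prob_dists_def)
  have Fb: "Fl (\<mu> a * Vlam l a b) (outd \<mu> (Vlam l) b)
     \<le> (1 - t) * Fl (\<mu> a * Vlam l1 a b) (outd \<mu> (Vlam l1) b) + t * Fl (\<mu> a * Vlam l2 a b) (outd \<mu> (Vlam l2) b)" for a b
  proof -
    have e: "\<mu> a * Vlam l a b = (1 - t) * (\<mu> a * Vlam l1 a b) + t * (\<mu> a * Vlam l2 a b)"
      by (simp add: KV algebra_simps)
    have n1: "0 \<le> \<mu> a * Vlam l1 a b" using ch[OF l1] munn[of a] by (simp add: chan_def)
    have n2: "0 \<le> \<mu> a * Vlam l2 a b" using ch[OF l2] munn[of a] by (simp add: chan_def)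
    show ?thesis unfolding e q
      by (rule Fl_convex[OF n1 outd_ge[OF mu ch[OF l1]] n2 outd_ge[OF mu ch[OF l2]]]) (use t in auto)
  qed
  have "A l \<le> (1 - t) * A l1 + t * A l2"
    unfolding A_def sum_comb
  proof (rule sum_mono)
    fix a :: "('x \<Rightarrow> 'y) \<Rightarrow> 'x"
    have "(\<Sum>b\<in>UNIV. Fl (\<mu> a * Vlam l a b) (outd \<mu> (Vlam l) b))
       \<le> (\<Sum>b\<in>UNIV. (1 - t) * Fl (\<mu> a * Vlam l1 a b) (outd \<mu> (Vlam l1) b) + t * Fl (\<mu> a * Vlam l2 a b) (outd \<mu> (Vlam l2) b))"
      by (rule sum_mono) (rule Fb)
    also have "\<dots> = (1 - t) * (\<Sum>b\<in>UNIV. Fl (\<mu> a * Vlam l1 a b) (outd \<mu> (Vlam l1) b)) + t * (\<Sum>b\<in>UNIV. Fl (\<mu> a * Vlam l2 a b) (outd \<mu> (Vlam l2) b))"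
      by (simp only: sum_comb)
    finally show "(\<Sum>b\<in>UNIV. Fl (\<mu> a * Vlam l a b) (outd \<mu> (Vlam l) b)) - \<mu> a * ln (\<mu> a)
      \<le> (1 - t) * ((\<Sum>b\<in>UNIV. Fl (\<mu> a * Vlam l1 a b) (outd \<mu> (Vlam l1) b)) - \<mu> a * ln (\<mu> a)) +
         t * ((\<Sum>b\<in>UNIV. Fl (\<mu> a * Vlam l2 a b) (outd \<mu> (Vlam l2) b)) - \<mu> a * ln (\<mu> a))"
      by (simp add: algebra_simps)
  qed
  then have "A l / ln 2 \<le> ((1 - t) * A l1 + t * A l2) / ln 2" by (simp add: divide_right_mono)
  then show "MI \<mu> (Vlam ((1 - t) *\<^sub>R l1 + t *\<^sub>R l2)) \<le> (1 - t) * MI \<mu> (Vlam l1) + t * MI \<mu> (Vlam l2)"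
    unfolding l_def[symmetric] MIA[OF lL] MIA[OF l1] MIA[OF l2] by (simp add: add_divide_distrib)
next
  show "convex (Lam W)" using Lam_basic by blast
qed



lemma Lam_main:
  fixes W :: "real^'y::finite^'x::finite" and g :: "'p \<Rightarrow> real^('x \<Rightarrow> 'y) \<Rightarrow> real"
    and C :: "real^('x \<Rightarrow> 'y) \<Rightarrow> real"
  assumes W: "is_channel W" and P: "P \<noteq> {}"
    and cont: "\<And>\<mu>. \<mu> \<in> P \<Longrightarrow> continuous_on (Lam W) (g \<mu>)"
    and cvx: "\<And>\<mu>. \<mu> \<in> P \<Longrightarrow> convex_on (Lam W) (g \<mu>)"
    and bnd: "\<And>\<mu> x. \<mu> \<in> P \<Longrightarrow> x \<in> Lam W \<Longrightarrow> g \<mu> x \<le> B"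
    and Ceq: "\<And>x. x \<in> Lam W \<Longrightarrow> C x = (SUP \<mu>\<in>P. g \<mu> x)"
  shows "(\<exists>a b. a \<le> b \<and> C ` Lam W = {a..b}) \<and> (\<exists>v. v extreme_point_of Lam W \<and> (\<forall>x\<in>Lam W. C x \<le> C v))"
proof (rule abstract_main[OF _ _ _ _ P cont cvx bnd Ceq])
  show "compact (Lam W)" "convex (Lam W)" using Lam_basic by blast+
  show "Lam W \<noteq> {}" using Lam_nonempty[OF W] by blast
  show "finite {v. v extreme_point_of Lam W}" by (rule finite_polyhedron_extreme_points[OF Lam_polyhedron])
qed

lemma upper_from:
  assumes "v extreme_point_of Lam W" "\<forall>x\<in>Lam W. C x \<le> C v"
  shows "C v = Cupper C W"
proof -
  have "v \<in> Lam W" using assms(1) by (simp add: extreme_point_of_def)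
  then show ?thesis unfolding Cupper_def using assms(2)
    by (intro cSup_eq_maximum[symmetric]) auto
qed

lemma lin_convex:
  fixes c :: "('x::finite \<Rightarrow> 'y::finite) \<Rightarrow> real" and W :: "real^'y^'x"
  shows "convex_on (Lam W) (\<lambda>l. \<Sum>D\<in>UNIV. l $ D * c D)"
proof (rule convex_onI)
  fix t :: real and l1 l2 :: "real^('x::finite \<Rightarrow> 'y::finite)"
  have "(\<Sum>D\<in>UNIV. ((1 - t) *\<^sub>R l1 + t *\<^sub>R l2) $ D * c D) = (1 - t) * (\<Sum>D\<in>UNIV. l1 $ D * c D) + t * (\<Sum>D\<in>UNIV. l2 $ D * c D)"
    unfolding sum_comb by (rule sum.cong) (simp_all add: algebra_simps)
  then show "(\<Sum>D\<in>UNIV. ((1 - t) *\<^sub>R l1 + t *\<^sub>R l2) $ D * c D) \<le> (1 - t) * (\<Sum>D\<in>UNIV. l1 $ D * c D) + t * (\<Sum>D\<in>UNIV. l2 $ D * c D)"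
    by simp
next
  show "convex (Lam W)" using Lam_basic by blast
qed

lemma lin_cont:
  fixes c :: "('x::finite \<Rightarrow> 'y::finite) \<Rightarrow> real"
  shows "continuous_on S (\<lambda>l. \<Sum>D\<in>UNIV. l $ D * c D)"
  by (intro continuous_intros)

lemma cont_bdd: "continuous_on (Lam W) f \<Longrightarrow> \<exists>B. \<forall>x\<in>Lam W. f x \<le> (B::real)"
proof -
  assume "continuous_on (Lam W) f"
  then have "compact (f ` Lam W)" using Lam_basic by (intro compact_continuous_image) auto
  then have "bdd_above (f ` Lam W)" by (simp add: bounded_imp_bdd_above compact_imp_bounded)
  then show ?thesis by (auto simp: bdd_above_def)
qed



theorem theorem7:
  fixes W :: "real^'y::finite^'x::finite"
  assumes "is_channel W"
  shows "bounded (Lam W) \<and> closed (Lam W) \<and> convex (Lam W) \<and> polytope (Lam W) \<and>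
    (\<forall>C \<in> {C10, C01, C11}.
        (\<exists>a b. a \<le> b \<and> C ` Lam W = {a..b}) \<and>
        (\<exists>v. v extreme_point_of Lam W \<and> C v = Cupper C W)) \<and>
    (\<exists>v. v extreme_point_of Lam W \<and> C11 v = Clower C11 W)"
proof -
  note W = assms
  have R: "(\<exists>a b. a \<le> b \<and> C ` Lam W = {a..b}) \<and> (\<exists>v. v extreme_point_of Lam W \<and> C v = Cupper C W)"
    if "(\<exists>a b. a \<le> b \<and> C ` Lam W = {a..b}) \<and> (\<exists>v. v extreme_point_of Lam W \<and> (\<forall>x\<in>Lam W. C x \<le> C v))"
    for C :: "real^('x \<Rightarrow> 'y) \<Rightarrow> real"
    using that upper_from by metis
  have h10: "(\<exists>a b. a \<le> b \<and> C10 ` Lam W = {a..b}) \<and> (\<exists>v. v extreme_point_of Lam W \<and> C10 v = Cupper C10 W)"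
  proof (rule R, rule Lam_main[OF W, of "prob_dists" "\<lambda>\<mu> l. MI \<mu> (Vlam l)" "2 * real CARD(('x \<Rightarrow> 'y) \<Rightarrow> 'x)"])
    show "prob_dists \<noteq> {}" using prob_dists_ne by blast
    show "continuous_on (Lam W) (\<lambda>l. MI \<mu> (Vlam l))" if "\<mu> \<in> prob_dists" for \<mu> :: "(('x \<Rightarrow> 'y) \<Rightarrow> 'x) \<Rightarrow> real"
      by (rule C10_cont[OF that])
    show "convex_on (Lam W) (\<lambda>l. MI \<mu> (Vlam l))" if "\<mu> \<in> prob_dists" for \<mu> :: "(('x \<Rightarrow> 'y) \<Rightarrow> 'x) \<Rightarrow> real"
      by (rule C10_convex[OF that])
    show "MI \<mu> (Vlam x) \<le> 2 * real CARD(('x \<Rightarrow> 'y) \<Rightarrow> 'x)" if "\<mu> \<in> prob_dists" "x \<in> Lam W" for \<mu> :: "(('x \<Rightarrow> 'y) \<Rightarrow> 'x) \<Rightarrow> real" and x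
      using LamD[OF that(2)] by (intro MI_bound[OF that(1)] chan_Vlam) auto
    show "C10 x = (SUP \<mu>\<in>prob_dists. MI \<mu> (Vlam x))" for x by (simp add: C10_def)
  qed
  have h01: "(\<exists>a b. a \<le> b \<and> C01 ` Lam W = {a..b}) \<and> (\<exists>v. v extreme_point_of Lam W \<and> C01 v = Cupper C01 W)"
  proof (rule R, rule Lam_main[OF W, of "prob_dists" "\<lambda>\<mu> l. \<Sum>D\<in>UNIV. l $ D * MI \<mu> (\<lambda>x y. detmat D $ x $ y)" "2 * real CARD('x)"])
    show "prob_dists \<noteq> {}" using prob_dists_ne by blast
    show "continuous_on (Lam W) (\<lambda>l. \<Sum>D\<in>UNIV. l $ D * MI \<mu> (\<lambda>x y. detmat D $ x $ y))" for \<mu> :: "'x \<Rightarrow> real"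
      by (rule lin_cont)
    show "convex_on (Lam W) (\<lambda>l. \<Sum>D\<in>UNIV. l $ D * MI \<mu> (\<lambda>x y. detmat D $ x $ y))" for \<mu> :: "'x \<Rightarrow> real"
      by (rule lin_convex)
    show "(\<Sum>D\<in>UNIV. x $ D * MI \<mu> (\<lambda>x y. detmat D $ x $ y)) \<le> 2 * real CARD('x)"
      if "\<mu> \<in> prob_dists" "x \<in> Lam W" for \<mu> :: "'x \<Rightarrow> real" and x
    proof -
      have "(\<Sum>D\<in>UNIV. x $ D * MI \<mu> (\<lambda>x y. detmat D $ x $ y)) \<le> (\<Sum>D\<in>UNIV. x $ D * (2 * real CARD('x)))"
        using LamD[OF that(2)] MI_bound[OF that(1) chan_detmat]
        by (intro sum_mono mult_left_mono) auto
      also have "\<dots> = 2 * real CARD('x)" using LamD[OF that(2)] by (simp add: sum_distrib_right[symmetric])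
      finally show ?thesis .
    qed
    show "C01 x = (SUP \<mu>\<in>prob_dists. \<Sum>D\<in>UNIV. x $ D * MI \<mu> (\<lambda>x y. detmat D $ x $ y))" for x
      by (simp add: C01_def)
  qed
  have C11e: "C11 = (\<lambda>l. \<Sum>D\<in>UNIV. l $ D * log 2 (real (rank (detmat D))))"
    by (rule ext) (simp add: C11_def)
  have C11c: "continuous_on (Lam W) C11" unfolding C11e by (rule lin_cont)
  obtain B where B: "\<And>x. x \<in> Lam W \<Longrightarrow> C11 x \<le> B" using cont_bdd[OF C11c] by blast
  have h11: "(\<exists>a b. a \<le> b \<and> C11 ` Lam W = {a..b}) \<and> (\<exists>v. v extreme_point_of Lam W \<and> C11 v = Cupper C11 W)"
  proof (rule R, rule Lam_main[OF W, of "UNIV :: unit set" "\<lambda>_ l. C11 l" B])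
    show "continuous_on (Lam W) C11" by (rule C11c)
    show "convex_on (Lam W) C11" unfolding C11e by (rule lin_convex)
  qed (use B in auto)
  have mC11e: "(\<lambda>l. - C11 l) = (\<lambda>l. \<Sum>D\<in>UNIV. l $ D * (- log 2 (real (rank (detmat D)))))"
    by (rule ext) (simp add: C11_def sum_negf)
  have mC11c: "continuous_on (Lam W) (\<lambda>l. - C11 l)" unfolding mC11e by (rule lin_cont)
  obtain B' where B': "\<And>x. x \<in> Lam W \<Longrightarrow> - C11 x \<le> B'" using cont_bdd[OF mC11c] by blast
  have "(\<exists>a b. a \<le> b \<and> (\<lambda>l. - C11 l) ` Lam W = {a..b}) \<and> (\<exists>v. v extreme_point_of Lam W \<and> (\<forall>x\<in>Lam W. - C11 x \<le> - C11 v))"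
  proof (rule Lam_main[OF W, of "UNIV :: unit set" "\<lambda>_ l. - C11 l" B'])
    show "continuous_on (Lam W) (\<lambda>l. - C11 l)" by (rule mC11c)
    show "convex_on (Lam W) (\<lambda>l. - C11 l)" unfolding mC11e by (rule lin_convex)
  qed (use B' in auto)
  then obtain v where v: "v extreme_point_of Lam W" "\<forall>x\<in>Lam W. C11 v \<le> C11 x" by auto
  have vL: "v \<in> Lam W" using v(1) by (simp add: extreme_point_of_def)
  have low: "C11 v = Clower C11 W"
    unfolding Clower_def using v(2) vL by (intro cInf_eq_minimum[symmetric]) auto
  have basic: "bounded (Lam W) \<and> closed (Lam W) \<and> convex (Lam W) \<and> polytope (Lam W)"
    using Lam_basic by blast
  show ?thesis
    using basic h10 h01 h11 low v(1) by auto
qed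


end
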